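(* Let $1<p<\infty$. The functions $x(\theta)=\cos_p\theta$, $y(\theta)=\sin_p\theta$ are the solution of the system \[ \frac{dx}{d\theta}=-|y|^{p-1}\operatorname{sgn}y,\qquad \frac{dy}{d\theta}=|x|^{p-1}\operatorname{sgn}x,\qquad x(0)=1,\ y(0)=0. \] Moreover, with $pq=p+q$ and $\theta^\circ=\varphi_q^{-1}(\varphi_p(\theta))$, one has $\frac{d}{d\theta}\cos_p\theta=-\sin_q\theta^\circ$ and $\frac{d}{d\theta}\sin_p\theta=\cos_q\theta^\circ$.
   Context: Let $B(x;a,b)=\int_0^xt^{a-1}(1-t)^{b-1}dt$, $\mathbb{S}_p=4\Gamma^2(1+\frac1p)/\Gamma(1+\frac2p)$, and for $\varphi\in\mathbb{R}$ with $k=\lfloor4\varphi/\pi\rfloor$ put $\Theta_p(\varphi)=\frac{k-\lfloor k/2\rfloor}{2}\mathbb{S}_p+(-1)^k\frac1p4^{-1/p}B(\sin^22\varphi;\frac1p,\frac12)$; $\Theta_p$ is a strictly increasing bijection of $\mathbb{R}$, $\varphi_p=\Theta_p^{-1}$, $\cos_p\theta=|\cos\varphi_p(\theta)|^{2/p}\operatorname{sgn}\cos\varphi_p(\theta)$, $\sin_p\theta=|\sin\varphi_p(\theta)|^{2/p}\operatorname{sgn}\sin\varphi_p(\theta)$; the same definitions with $q$ in place of $p$ give $\varphi_q,\cos_q,\sin_q$. *)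

theory Defs
  imports "HOL-Analysis.Analysis"
begin

definition incBeta :: "real \<Rightarrow> real \<Rightarrow> real \<Rightarrow> real" where
  "incBeta x a b = integral {0..x} (\<lambda>t. t powr (a - 1) * (1 - t) powr (b - 1))"

definition SS :: "real \<Rightarrow> real" where
  "SS p = 4 * (Gamma (1 + 1 / p))\<^sup>2 / Gamma (1 + 2 / p)"

definition Theta :: "real \<Rightarrow> real \<Rightarrow> real" where
  "Theta p \<phi> = (let k = \<lfloor>4 * \<phi> / pi\<rfloor> in
     real_of_int (k - \<lfloor>real_of_int k / 2\<rfloor>) / 2 * SS p
     + ((-1) powi k) * (1 / p) * 4 powr (- 1 / p) * incBeta ((sin (2 * \<phi>))\<^sup>2) (1 / p) (1 / 2))"

definition phi :: "real \<Rightarrow> real \<Rightarrow> real" where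
  "phi p = inv (Theta p)"

definition cosp :: "real \<Rightarrow> real \<Rightarrow> real" where
  "cosp p \<theta> = \<bar>cos (phi p \<theta>)\<bar> powr (2 / p) * sgn (cos (phi p \<theta>))"

definition sinp :: "real \<Rightarrow> real \<Rightarrow> real" where
  "sinp p \<theta> = \<bar>sin (phi p \<theta>)\<bar> powr (2 / p) * sgn (sin (phi p \<theta>))"

end

theory Submission
  imports Defs
begin

lemma powi_m1_eq: "(-1::real) powi k = (if even k then 1 else -1)"
proof (induction k rule: int_induct[where k=0])
  case base then show ?case by simp
next
  case (step1 i)
  have "(-1::real) powi (i + 1) = (-1) powi i * (-1)" by (simp add: power_int_add)
  then show ?case using step1 by auto
next
  case (step2 i)
  have "(-1::real) powi ((i - 1) + 1) = (-1) powi (i - 1) * (-1)" using power_int_add[of "-1::real" "i - 1" 1] by simp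
  hence "(-1::real) powi (i - 1) = - ((-1) powi i)" by simp
  then show ?case using step2 by auto
qed
lemma sin_shift_int: "sin (x + of_int m * pi) = (if even m then sin x else - sin x)"
proof (induction m rule: int_induct[where k=0])
  case base then show ?case by simp
next
  case (step1 i)
  have e: "x + of_int (i+1) * pi = (x + of_int i * pi) + pi" by (simp add: algebra_simps)
  have "sin (x + of_int (i+1) * pi) = - sin (x + of_int i * pi)"
    by (simp only: e sin_periodic_pi)
  then show ?case using step1 by auto
next
  case (step2 i)
  have e: "x + of_int i * pi = (x + of_int (i - 1) * pi) + pi" by (simp add: algebra_simps)
  have "sin (x + of_int i * pi) = - sin (x + of_int (i - 1) * pi)"
    by (simp only: e sin_periodic_pi)
  then show ?case using step2 by auto
qed

lemma cos_shift_int: "cos (x + of_int m * pi) = (if even m then cos x else - cos x)"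
proof (induction m rule: int_induct[where k=0])
  case base then show ?case by simp
next
  case (step1 i)
  have e: "x + of_int (i+1) * pi = (x + of_int i * pi) + pi" by (simp add: algebra_simps)
  have "cos (x + of_int (i+1) * pi) = - cos (x + of_int i * pi)"
    by (simp only: e cos_periodic_pi)
  then show ?case using step1 by auto
next
  case (step2 i)
  have e: "x + of_int i * pi = (x + of_int (i - 1) * pi) + pi" by (simp add: algebra_simps)
  have "cos (x + of_int i * pi) = - cos (x + of_int (i - 1) * pi)"
    by (simp only: e cos_periodic_pi)
  then show ?case using step2 by auto
qed

lemma sign_sin_int: assumes "of_int m * pi < t" "t < of_int (m+1) * pi"
  shows "(if even m then sin t else - sin t) > 0"
proof -
  have e: "t = (t - of_int m * pi) + of_int m * pi" by simp
  have "sin t = (if even m then sin (t - of_int m * pi) else - sin (t - of_int m * pi))"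
    by (subst e, rule sin_shift_int)
  moreover have "sin (t - of_int m * pi) > 0" using assms by (intro sin_gt_zero) (auto simp: algebra_simps)
  ultimately show ?thesis by auto
qed



definition ps :: "real \<Rightarrow> real \<Rightarrow> real" where "ps a u = \<bar>u\<bar> powr a * sgn u"

lemma ps_deriv: assumes "u \<noteq> 0" shows "(ps a has_real_derivative a * \<bar>u\<bar> powr (a - 1)) (at u)"
proof (cases "u > 0")
  case True
  have d: "((\<lambda>u. u powr a) has_real_derivative a * u powr (a - 1)) (at u)"
    using True by (rule has_real_derivative_powr)
  have "(ps a has_real_derivative a * u powr (a - 1)) (at u)"
    by (rule has_field_derivative_transform_within_open[OF d, of "{0<..}"]) (use True in \<open>auto simp: ps_def\<close>)
  then show ?thesis using True by simp
next
  case False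
  hence u: "u < 0" using assms by auto
  have d1: "((\<lambda>u. - u) has_real_derivative (-1)) (at u)" by (rule DERIV_minus[OF DERIV_ident])
  have "((\<lambda>u. (- u) powr a) has_real_derivative a * (-u) powr (a - of_nat 1) * (-1)) (at u)"
    using u by (intro DERIV_fun_powr[OF d1]) auto
  hence d: "((\<lambda>u. - ((- u) powr a)) has_real_derivative - (a * (-u) powr (a - of_nat 1) * (-1))) (at u)"
    by (rule DERIV_minus)
  have "(ps a has_real_derivative - (a * (-u) powr (a - of_nat 1) * (-1))) (at u)"
    by (rule has_field_derivative_transform_within_open[OF d, of "{..<0}"]) (use u in \<open>auto simp: ps_def\<close>)
  moreover have "- (a * (-u) powr (a - of_nat 1) * (-1)) = a * \<bar>u\<bar> powr (a - 1)" using u by simp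
  ultimately show ?thesis by metis
qed

lemma ps_cont: assumes "a > 0" shows "isCont (ps a) u"
proof (cases "u = 0")
  case True
  have t0: "((\<lambda>v::real. \<bar>v\<bar>) \<longlongrightarrow> 0) (at 0)"
    using tendsto_rabs_zero[OF tendsto_ident_at] by simp
  have l: "((\<lambda>v::real. \<bar>v\<bar> powr a) \<longlongrightarrow> 0) (at 0)"
    by (rule tendsto_zero_powrI[OF t0 tendsto_const _ assms]) simp
  have b: "norm (ps a v) \<le> \<bar>v\<bar> powr a" for v
    by (auto simp: ps_def abs_mult sgn_if)
  have "(ps a \<longlongrightarrow> 0) (at 0)"
    by (rule Lim_null_comparison[OF always_eventually l]) (use b in blast)
  then show ?thesis using True by (simp add: isCont_def ps_def)
next
  case False
  then show ?thesis using ps_deriv[OF False] DERIV_isCont by blast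
qed


lemma incBeta_0: "incBeta 0 a b = 0"
  by (simp add: incBeta_def)

lemma incBeta_1: assumes "a > 0" "b > 0" shows "incBeta 1 a b = Beta a b"
  unfolding incBeta_def using has_integral_Beta_real[OF assms] by (rule integral_unique)

lemma incBeta_cont: assumes "a > 0" "b > 0" shows "continuous_on {0..1} (\<lambda>x. incBeta x a b)"
  unfolding incBeta_def by (rule indefinite_integral_continuous_1[OF integrable_Beta'[OF assms]])

lemma incBeta_deriv: assumes "a > 0" "b > 0" "0 < x" "x < 1"
  shows "((\<lambda>x. incBeta x a b) has_real_derivative x powr (a - 1) * (1 - x) powr (b - 1)) (at x)"
proof -
  define f where "f = (\<lambda>t::real. t powr (a - 1) * (1 - t) powr (b - 1))"
  define c where "c = x / 2"
  define d where "d = (1 + x) / 2"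
  have cd: "0 < c" "c < x" "x < d" "d < 1" using assms by (auto simp: c_def d_def)
  have cf: "continuous_on {c..d} f"
  proof -
    have "continuous_on {c..d} (\<lambda>t::real. t powr (a - 1))"
      by (rule continuous_on_powr') (use cd in \<open>auto intro: continuous_on_id continuous_on_const\<close>)
    moreover have "continuous_on {c..d} (\<lambda>t::real. (1 - t) powr (b - 1))"
      by (rule continuous_on_powr') (use cd in \<open>auto intro: continuous_on_diff continuous_on_id continuous_on_const\<close>)
    ultimately show ?thesis unfolding f_def by (rule continuous_on_mult)
  qed
  have "((\<lambda>y. integral {c..y} f) has_real_derivative f x) (at x within {c..d})"
    by (rule integral_has_real_derivative[OF cf]) (use cd in auto)
  moreover have "at x within {c..d} = at x"
    by (rule at_within_interior) (use cd in auto)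
  ultimately have D: "((\<lambda>y. integral {0..c} f + integral {c..y} f) has_real_derivative f x) (at x)"
    using DERIV_add[OF DERIV_const] by fastforce
  have I: "f integrable_on {0..1}" unfolding f_def by (rule integrable_Beta'[OF assms(1,2)])
  have eq: "integral {0..c} f + integral {c..y} f = incBeta y a b" if "y \<in> {c<..<d}" for y
  proof -
    have "f integrable_on {0..y}" by (rule integrable_on_subinterval[OF I]) (use that cd in auto)
    then have "integral {0..c} f + integral {c..y} f = integral {0..y} f"
      by (intro Henstock_Kurzweil_Integration.integral_combine) (use that cd in auto)
    then show ?thesis by (simp add: incBeta_def f_def)
  qed
  have "((\<lambda>x. incBeta x a b) has_real_derivative f x) (at x)"
    by (rule has_field_derivative_transform_within_open[OF D, of "{c<..<d}"])
      (use cd eq in auto)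
  then show ?thesis by (simp add: f_def)
qed

lemma aux: fixes gg kk ss ww a hh :: real
  assumes "gg>0" "kk>0" "ss>0" "ww>0" "a>0" and e: "gg*kk = 2*ww* ss*hh"
  shows "a*gg^2/(2*hh) = a*ww*gg* ss/kk"
proof -
  have "2*ww* ss*hh > 0" using e assms by (metis mult_pos_pos)
  hence hh: "hh > 0" using assms by (smt (verit) mult_pos_pos zero_less_mult_iff)
  have "a*gg^2*kk = a*ww*gg* ss*(2*hh)"
  proof -
    have "a*gg^2*kk = a*gg*(gg*kk)" by (simp add: power2_eq_square)
    also have "\<dots> = a*gg*(2*ww* ss*hh)" by (simp only: e)
    finally show ?thesis by (simp add: algebra_simps)
  qed
  then show ?thesis using hh assms by (simp add: frac_eq_eq)
qed

lemma aux2: fixes G a H :: real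
  assumes "a>0"
  shows "(a*G)^2/((2*a)*H) = a*G^2/(2*H)"
  using assms by (simp add: power2_eq_square)

lemma pos_notin_npi: "(x::real) > 0 \<Longrightarrow> x \<notin> \<int>\<^sub>\<le>\<^sub>0" by auto

lemma dup_real: assumes "a > 0"
  shows "Gamma a * Gamma (a + 1/2) = exp ((1 - 2*a) * ln 2) * sqrt pi * Gamma (2*a)"
proof -
  have h1: "complex_of_real a \<notin> \<int>\<^sub>\<le>\<^sub>0" using assms by (simp add: of_real_in_nonpos_Ints_iff pos_notin_npi)
  have h2: "complex_of_real a + 1/2 \<notin> \<int>\<^sub>\<le>\<^sub>0"
  proof -
    have "complex_of_real a + 1/2 = complex_of_real (a + 1/2)" by simp
    then show ?thesis using assms by (simp only: of_real_in_nonpos_Ints_iff) (intro pos_notin_npi, simp)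
  qed
  have G: "Gamma (complex_of_real a) * Gamma (complex_of_real a + 1/2) =
        exp ((1 - 2 * complex_of_real a) * of_real (ln 2)) * of_real (sqrt pi) * Gamma (2 * complex_of_real a)"
    by (rule Gamma_legendre_duplication[OF h1 h2])
  have e0: "complex_of_real a + 1/2 = complex_of_real (a + 1/2)" by simp
  have e1: "(1 - 2 * complex_of_real a) * of_real (ln 2) = of_real ((1 - 2*a) * ln 2)" by simp
  have e2: "2 * complex_of_real a = of_real (2 * a)" by simp
  have L: "Gamma (complex_of_real a) * Gamma (complex_of_real a + 1/2) = complex_of_real (Gamma a * Gamma (a + 1/2))"
    by (simp only: e0 Gamma_complex_of_real of_real_mult)
  have R: "exp ((1 - 2 * complex_of_real a) * of_real (ln 2)) * of_real (sqrt pi) * Gamma (2 * complex_of_real a)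
      = complex_of_real (exp ((1 - 2*a) * ln 2) * sqrt pi * Gamma (2*a))"
    by (subst e1, subst e2, subst exp_of_real, subst Gamma_complex_of_real) (simp only: of_real_mult)
  have "complex_of_real (Gamma a * Gamma (a + 1/2)) =
      complex_of_real (exp ((1 - 2*a) * ln 2) * sqrt pi * Gamma (2*a))"
    using G L R by simp
  then show ?thesis by (simp only: of_real_eq_iff)
qed

lemma beta_SS: assumes "p > 0"
  shows "(1 / p) * 4 powr (- 1 / p) * Beta (1 / p) (1 / 2) = SS p / 4"
proof -
  define a where "a = 1 / p"
  have a: "a > 0" using assms by (simp add: a_def)
  have D: "Gamma a * Gamma (a + 1/2) = exp ((1 - 2*a) * ln 2) * sqrt pi * Gamma (2*a)"
    by (rule dup_real[OF a])
  have g1: "Gamma (1 + a) = a * Gamma a" using Gamma_plus1[of a] a by (simp add: add.commute pos_notin_npi)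
  have g2: "Gamma (1 + 2 * a) = (2 * a) * Gamma (2 * a)" using Gamma_plus1[of "2*a"] a by (simp add: add.commute pos_notin_npi)
  have E: "exp ((1 - 2*a) * ln 2) = 2 * 4 powr (-a)"
  proof -
    have "exp ((1 - 2*a) * ln 2) = 2 powr (1 - 2*a)" by (simp add: powr_def)
    also have "\<dots> = 2 * 2 powr (- 2 * a)" by (simp add: powr_diff powr_minus divide_inverse)
    also have "(2::real) powr (- 2 * a) = 4 powr (-a)"
    proof -
      have "(4::real) powr (-a) = (2 powr 2) powr (-a)" by simp
      also have "\<dots> = 2 powr (2 * (-a))" by (simp only: powr_powr)
      finally show ?thesis by simp
    qed
    finally show ?thesis .
  qed
  have pos: "Gamma a > 0" "Gamma (a + 1/2) > 0" "Gamma (2*a) > 0" "sqrt pi > 0"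
    using a by auto
  have "SS p / 4 = (Gamma (1 + a))\<^sup>2 / Gamma (1 + 2 * a)" by (simp add: SS_def a_def)
  also have "\<dots> = (a * Gamma a)\<^sup>2 / ((2 * a) * Gamma (2 * a))" by (simp only: g1 g2)
  also have "\<dots> = a * (Gamma a)\<^sup>2 / (2 * Gamma (2 * a))" using a by (rule aux2)
  also have "\<dots> = a * 4 powr (-a) * Gamma a * sqrt pi / Gamma (a + 1/2)"
  proof -
    have "Gamma a * Gamma (a + 1/2) = 2 * 4 powr (-a) * sqrt pi * Gamma (2*a)" using D E by simp
    then show ?thesis using pos a by (intro aux) auto
  qed
  also have "\<dots> = (1 / p) * 4 powr (- 1 / p) * Beta (1 / p) (1 / 2)"
    by (simp add: Beta_def a_def Gamma_one_half_real)
  finally show ?thesis by simp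
qed

definition AA :: "real \<Rightarrow> int \<Rightarrow> real" where
  "AA p k = real_of_int (k - \<lfloor>real_of_int k / 2\<rfloor>) / 2 * SS p"

definition EE :: "real \<Rightarrow> int \<Rightarrow> real \<Rightarrow> real" where
  "EE p m x = AA p m + (if even m then 1 else -1) * (1 / p) * 4 powr (- 1 / p)
      * incBeta ((sin (2 * x))\<^sup>2) (1 / p) (1 / 2)"

lemma Theta_eq: "Theta p x = EE p \<lfloor>4 * x / pi\<rfloor> x"
  unfolding Theta_def EE_def AA_def Let_def powi_m1_eq by simp

lemma floor_quarter: assumes "of_int m * pi / 4 \<le> x" "x < of_int (m + 1) * pi / 4"
  shows "\<lfloor>4 * x / pi\<rfloor> = m"
proof -
  have "of_int m \<le> 4 * x / pi" using assms(1) pi_gt_zero by (simp add: field_simps)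
  moreover have "4 * x / pi < of_int m + 1" using assms(2) pi_gt_zero by (simp add: field_simps)
  ultimately show ?thesis by (simp add: floor_eq_iff)
qed

lemma EE_cont: assumes "p > 0" shows "isCont (EE p m) x"
proof -
  have ci: "continuous_on {0..1} (\<lambda>y. incBeta y (1 / p) (1 / 2))"
    by (rule incBeta_cont) (use assms in auto)
  have cs: "continuous_on UNIV (\<lambda>x::real. (sin (2 * x))\<^sup>2)"
    by (intro continuous_intros)
  have rng: "(\<lambda>x::real. (sin (2 * x))\<^sup>2) ` UNIV \<subseteq> {0..1}"
    by (auto simp: abs_square_le_1)
  have "continuous_on UNIV (\<lambda>x. incBeta ((sin (2 * x))\<^sup>2) (1 / p) (1 / 2))"
    using continuous_on_compose[OF cs continuous_on_subset[OF ci rng]] by (simp add: o_def)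
  hence "continuous_on UNIV (EE p m)"
    unfolding EE_def by (intro continuous_on_add continuous_on_mult continuous_on_const) auto
  then show ?thesis by (simp add: continuous_on_eq_continuous_at)
qed

lemma floor_half_even: "\<lfloor>real_of_int (2 * j) / 2\<rfloor> = j" by simp
lemma floor_half_odd: "\<lfloor>real_of_int (2 * j + 1) / 2\<rfloor> = j"
  by (simp add: floor_eq_iff)

lemma EE_match: assumes "p > 0"
  shows "EE p (n - 1) (of_int n * pi / 4) = EE p n (of_int n * pi / 4)"
proof (cases "even n")
  case True
  then obtain j where j: "n = 2 * j" by (metis evenE)
  have arg: "2 * (of_int n * pi / 4) = 0 + of_int j * pi" using j by (simp add: field_simps)
  have "sin (2 * (of_int n * pi / 4)) = sin (0 + of_int j * pi)" by (simp only: arg)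
  also have "\<dots> = 0" by (simp only: sin_shift_int) simp
  finally have s: "sin (2 * (of_int n * pi / 4)) = 0" .
  have f1: "\<lfloor>real_of_int (2 * j - 1) / 2\<rfloor> = j - 1" by (simp add: floor_eq_iff)
  have AA1: "AA p (n - 1) = of_int j / 2 * SS p" using j f1 by (simp add: AA_def)
  have AA2: "AA p n = of_int j / 2 * SS p" using j by (simp add: AA_def)
  show ?thesis using AA1 AA2 s
    by (simp add: EE_def incBeta_0)
next
  case False
  then obtain j where j: "n = 2 * j + 1" by (metis oddE)
  have arg: "2 * (of_int n * pi / 4) = pi / 2 + of_int j * pi" using j by (simp add: field_simps)
  have "sin (2 * (of_int n * pi / 4)) = sin (pi / 2 + of_int j * pi)" by (simp only: arg)
  also have "\<dots> = (if even j then 1 else -1)" by (simp only: sin_shift_int) simp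
  finally have s: "(sin (2 * (of_int n * pi / 4)))\<^sup>2 = 1" by simp
  have b: "(1 / p) * 4 powr (- 1 / p) * incBeta 1 (1 / p) (1 / 2) = SS p / 4"
    using beta_SS[OF assms] incBeta_1[of "1/p" "1/2"] assms by simp
  have f0: "\<lfloor>real_of_int (2 * j + 1) / 2\<rfloor> = j" by (rule floor_half_odd)
  have AA1: "AA p (n - 1) = of_int j / 2 * SS p" using j by (simp add: AA_def)
  have AA2: "AA p n = (of_int j + 1) / 2 * SS p" using j f0 by (simp add: AA_def)
  have ev: "even (n - 1)" using j by simp
  have X: "EE p (n - 1) (of_int n * pi / 4) = AA p (n - 1) + 1 * (1 / p) * 4 powr (- 1 / p) * incBeta 1 (1 / p) (1 / 2)"
    unfolding EE_def s using ev by (simp only: if_True)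
  have Y: "EE p n (of_int n * pi / 4) = AA p n + (-1) * (1 / p) * 4 powr (- 1 / p) * incBeta 1 (1 / p) (1 / 2)"
    unfolding EE_def s using False by (simp only: if_False)
  have "EE p (n - 1) (of_int n * pi / 4) = of_int j / 2 * SS p + SS p / 4"
    using X AA1 b by simp
  also have "\<dots> = (of_int j + 1) / 2 * SS p - SS p / 4" by (simp add: field_simps)
  also have "\<dots> = EE p n (of_int n * pi / 4)"
    using Y AA2 b by simp
  finally show ?thesis .
qed

lemma Theta_on: assumes "p > 0" "of_int m * pi / 4 \<le> x" "x \<le> of_int (m + 1) * pi / 4"
  shows "Theta p x = EE p m x"
proof (cases "x < of_int (m + 1) * pi / 4")
  case True
  then show ?thesis using floor_quarter[OF assms(2) True] by (simp add: Theta_eq)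
next
  case False
  hence x: "x = of_int (m + 1) * pi / 4" using assms by auto
  have b1: "of_int (m+1) * pi / 4 \<le> x" "x < of_int (m+1+1) * pi / 4" using x pi_gt_zero by (auto simp: field_simps)
  have "\<lfloor>4 * x / pi\<rfloor> = m + 1" by (rule floor_quarter[OF b1])
  hence "Theta p x = EE p (m + 1) x" by (simp add: Theta_eq)
  also have "\<dots> = EE p (m + 1 - 1) x" using EE_match[OF assms(1), of "m+1"] by (simp only: x)
  also have "\<dots> = EE p m x" by simp
  finally show ?thesis .
qed

lemma alg_deriv:
  fixes s co sg a w :: real
  assumes s: "s \<noteq> 0" and co: "co \<noteq> 0" and sc: "s^2 + co^2 = 1" and sg: "sg * s * co > 0"
    and sg1: "sg = 1 \<or> sg = -1"
  shows "0 + sg * a * w * ((s^2) powr (a - 1) * (1 - s^2) powr (1/2 - 1) * (of_nat 2 * ((co * (2 * 1)) * s ^ (2 - Suc 0))))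
       = 4 * (a * w) * \<bar>s\<bar> powr (2 * a - 1)"
proof -
  have as: "\<bar>s\<bar> > 0" "\<bar>co\<bar> > 0" using s co by auto
  have e1: "s^2 = \<bar>s\<bar> powr 2" using as by (simp add: powr_numeral)
  have e1': "(s^2) powr (a - 1) = \<bar>s\<bar> powr (2 * (a - 1))" by (simp only: e1 powr_powr)
  have e2: "1 - s^2 = \<bar>co\<bar> powr 2" using sc as by (simp add: powr_numeral)
  have e2': "(1 - s^2) powr (1/2 - 1) = 1 / \<bar>co\<bar>"
  proof -
    have "(1 - s^2) powr (1/2 - 1) = \<bar>co\<bar> powr (2 * (1/2 - 1))" by (simp only: e2 powr_powr)
    also have "\<dots> = \<bar>co\<bar> powr (- 1)" by simp
    also have "\<dots> = 1 / \<bar>co\<bar>" using as by (simp add: powr_minus divide_inverse)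
    finally show ?thesis .
  qed
  have e3: "sg * s * co = \<bar>s\<bar> * \<bar>co\<bar>"
  proof -
    have "\<bar>sg * s * co\<bar> = \<bar>s\<bar> * \<bar>co\<bar>" using sg1 by (auto simp: abs_mult)
    then show ?thesis using sg by simp
  qed
  have e4: "\<bar>s\<bar> powr (2 * (a - 1)) * \<bar>s\<bar> = \<bar>s\<bar> powr (2 * a - 1)"
  proof -
    have "\<bar>s\<bar> powr (2 * (a - 1)) * \<bar>s\<bar> = \<bar>s\<bar> powr (2 * (a - 1)) * \<bar>s\<bar> powr 1" using as by simp
    also have "\<dots> = \<bar>s\<bar> powr (2 * (a - 1) + 1)" by (simp only: powr_add)
    also have "2 * (a - 1) + 1 = 2 * a - 1" by simp
    finally show ?thesis .
  qed
  have "0 + sg * a * w * ((s^2) powr (a - 1) * (1 - s^2) powr (1/2 - 1) * (of_nat 2 * ((co * (2 * 1)) * s ^ (2 - Suc 0))))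
      = 4 * (a * w) * (\<bar>s\<bar> powr (2 * (a - 1)) * (sg * s * co) / \<bar>co\<bar>)"
    by (simp only: e1' e2') (simp add: field_simps)
  also have "\<dots> = 4 * (a * w) * (\<bar>s\<bar> powr (2 * (a - 1)) * \<bar>s\<bar>)" using as by (simp add: e3)
  also have "\<dots> = 4 * (a * w) * \<bar>s\<bar> powr (2 * a - 1)" by (simp only: e4)
  finally show ?thesis .
qed

definition Tp :: "real \<Rightarrow> real \<Rightarrow> real" where
  "Tp p x = 4 * ((1 / p) * 4 powr (- 1 / p)) * \<bar>sin (2 * x)\<bar> powr (2 / p - 1)"

lemma trig_facts: assumes "of_int m * pi / 4 < x" "x < of_int (m + 1) * pi / 4"
  shows "(if even m then 1 else -1) * sin (2 * x) * cos (2 * x) > 0"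
    "sin (2 * x) \<noteq> 0" "cos (2 * x) \<noteq> 0" "sin x \<noteq> 0" "cos x \<noteq> 0"
proof -
  have "of_int m * pi < 4 * x" "4 * x < of_int (m + 1) * pi" using assms by (auto simp: field_simps)
  from sign_sin_int[OF this] have A: "(if even m then sin (4 * x) else - sin (4 * x)) > 0" .
  have B: "sin (4 * x) = 2 * sin (2 * x) * cos (2 * x)" using sin_double[of "2 * x"] by simp
  show C: "(if even m then 1 else -1) * sin (2 * x) * cos (2 * x) > 0" using A B by (cases "even m") (auto simp: ac_simps)
  show D: "sin (2 * x) \<noteq> 0" "cos (2 * x) \<noteq> 0" using C by auto
  show "sin x \<noteq> 0" "cos x \<noteq> 0" using D(1) sin_double[of x] by auto
qed

lemma EE_deriv: assumes p: "p > 0" and x: "of_int m * pi / 4 < x" "x < of_int (m + 1) * pi / 4"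
  shows "(EE p m has_real_derivative Tp p x) (at x)"
proof -
  define sg :: real where "sg = (if even m then 1 else -1)"
  define s where "s = sin (2 * x)"
  define co where "co = cos (2 * x)"
  note tf = trig_facts[OF x, folded sg_def s_def co_def]
  have sc: "s^2 + co^2 = 1" by (simp add: s_def co_def)
  have v1: "0 < s^2" using tf(2) by simp
  have "0 < co^2" using tf(3) by simp
  hence v2: "s^2 < 1" using sc by linarith
  note v = v1 v2
  have d1: "((\<lambda>y. 2 * y) has_real_derivative 2 * 1) (at x)" by (rule DERIV_cmult[OF DERIV_ident])
  have d2: "((\<lambda>y. sin (2 * y)) has_real_derivative cos (2 * x) * (2 * 1)) (at x)"
    by (rule DERIV_chain2[OF DERIV_sin d1])
  have d3: "((\<lambda>y. (sin (2 * y))^2) has_real_derivative of_nat 2 * ((cos (2 * x) * (2 * 1)) * (sin (2 * x)) ^ (2 - Suc 0))) (at x)"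
    by (rule DERIV_power[OF d2])
  have dF: "((\<lambda>y. incBeta y (1 / p) (1 / 2)) has_real_derivative (s^2) powr (1 / p - 1) * (1 - s^2) powr (1 / 2 - 1)) (at (s^2))"
    by (rule incBeta_deriv) (use p v in auto)
  have d4: "((\<lambda>y. incBeta ((sin (2 * y))^2) (1 / p) (1 / 2)) has_real_derivative
      (s^2) powr (1 / p - 1) * (1 - s^2) powr (1 / 2 - 1) * (of_nat 2 * ((co * (2 * 1)) * s ^ (2 - Suc 0)))) (at x)"
    using DERIV_chain2[OF dF[unfolded s_def] d3] by (simp only: s_def co_def)
  have d5: "((\<lambda>y. AA p m + sg * (1 / p) * 4 powr (- 1 / p) * incBeta ((sin (2 * y))^2) (1 / p) (1 / 2)) has_real_derivative
      0 + sg * (1 / p) * 4 powr (- 1 / p) * ((s^2) powr (1 / p - 1) * (1 - s^2) powr (1 / 2 - 1) * (of_nat 2 * ((co * (2 * 1)) * s ^ (2 - Suc 0))))) (at x)"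
    by (rule DERIV_add[OF DERIV_const DERIV_cmult[OF d4]])
  have fe: "(\<lambda>y. AA p m + sg * (1 / p) * 4 powr (- 1 / p) * incBeta ((sin (2 * y))^2) (1 / p) (1 / 2)) = EE p m"
    by (rule ext) (simp add: EE_def sg_def)
  have ve: "0 + sg * (1 / p) * 4 powr (- 1 / p) * ((s^2) powr (1 / p - 1) * (1 - s^2) powr (1 / 2 - 1) * (of_nat 2 * ((co * (2 * 1)) * s ^ (2 - Suc 0))))
      = 4 * ((1 / p) * 4 powr (- 1 / p)) * \<bar>s\<bar> powr (2 * (1 / p) - 1)"
    by (rule alg_deriv) (use tf sc in \<open>auto simp: sg_def\<close>)
  have "Tp p x = 4 * ((1 / p) * 4 powr (- 1 / p)) * \<bar>s\<bar> powr (2 * (1 / p) - 1)"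
    by (simp add: Tp_def s_def)
  then show ?thesis using d5 fe ve by metis
qed

lemma Tp_pos: assumes "p > 0" "sin (2 * x) \<noteq> 0" shows "Tp p x > 0"
  using assms by (simp add: Tp_def)

lemma Theta_deriv: assumes p: "p > 0" and x: "of_int m * pi / 4 < x" "x < of_int (m + 1) * pi / 4"
  shows "(Theta p has_real_derivative Tp p x) (at x)"
proof -
  have eq: "EE p m y = Theta p y" if "y \<in> {of_int m * pi / 4 <..< of_int (m + 1) * pi / 4}" for y
    using Theta_on[OF p, of m y] that by auto
  show ?thesis
    by (rule has_field_derivative_transform_within_open[OF EE_deriv[OF assms], of "{of_int m * pi / 4 <..< of_int (m + 1) * pi / 4}"])
      (use x eq in auto)
qed

lemma Theta_cont: assumes p: "p > 0" shows "isCont (Theta p) x"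
proof -
  define m where "m = \<lfloor>4 * x / pi\<rfloor>"
  define c where "c = of_int m * pi / 4"
  have xm: "c \<le> x" "x < of_int (m + 1) * pi / 4"
  proof -
    have "of_int m \<le> 4 * x / pi" "4 * x / pi < of_int m + 1" unfolding m_def by linarith+
    then show "c \<le> x" "x < of_int (m + 1) * pi / 4" unfolding c_def using pi_gt_zero
      by (auto simp: field_simps)
  qed
  define G where "G = (\<lambda>y. if id y \<le> c then EE p (m - 1) y else EE p m y)"
  have cG: "continuous_on UNIV G" unfolding G_def
  proof (rule continuous_on_cases_le)
    show "continuous_on {x \<in> UNIV. id x \<le> c} (EE p (m - 1))"
      by (intro continuous_at_imp_continuous_on ballI EE_cont p)
    show "continuous_on {x \<in> UNIV. c \<le> id x} (EE p m)"
      by (intro continuous_at_imp_continuous_on ballI EE_cont p)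
    show "continuous_on UNIV id" unfolding id_def by (rule continuous_on_id)
    fix y assume "y \<in> (UNIV::real set)" "id y = c"
    hence "y = c" by simp
    then show "EE p (m - 1) y = EE p m y" unfolding c_def by (simp only: EE_match[OF p])
  qed
  define S where "S = {of_int (m - 1) * pi / 4 <..< of_int (m + 1) * pi / 4}"
  have A: "of_int (m - 1) * pi / 4 < of_int m * pi / 4" using pi_gt_zero by (simp add: field_simps)
  have B: "of_int m * pi / 4 \<le> x" using xm(1) by (simp only: c_def)
  have "of_int (m - 1) * pi / 4 < x" using A B by linarith
  hence xS: "x \<in> S" using xm(2) by (simp add: S_def)
  have eq: "G y = Theta p y" if "y \<in> S" for y
  proof (cases "y \<le> c")
    case True
    have "Theta p y = EE p (m - 1) y"
      by (rule Theta_on[OF p]) (use that True in \<open>auto simp: S_def c_def\<close>)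
    then show ?thesis using True by (simp add: G_def)
  next
    case False
    have "Theta p y = EE p m y"
      by (rule Theta_on[OF p]) (use that False in \<open>auto simp: S_def c_def\<close>)
    then show ?thesis using False by (simp add: G_def)
  qed
  have "eventually (\<lambda>y. y \<in> S) (nhds x)" by (rule eventually_nhds_in_open[OF _ xS]) (simp add: S_def)
  hence ev: "eventually (\<lambda>y. G y = Theta p y) (nhds x)" by (rule eventually_mono) (use eq in auto)
  have "isCont G x" using cG by (simp add: continuous_on_eq_continuous_at)
  then show ?thesis using isCont_cong[OF ev] by simp
qed

lemma mono_aux:
  fixes f f' :: "real \<Rightarrow> real"
  assumes "finite T" and cont: "\<And>x. isCont f x"
  shows "\<forall>a b. a < b \<longrightarrow> (\<forall>x. a < x \<and> x < b \<and> x \<notin> T \<longrightarrow> (f has_real_derivative f' x) (at x) \<and> f' x > 0)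
     \<longrightarrow> f a < f b"
  using assms(1)
proof (induction T rule: finite_induct)
  case empty
  show ?case
  proof (intro allI impI)
    fix a b :: real assume ab: "a < b" and d: "\<forall>x. a < x \<and> x < b \<and> x \<notin> {} \<longrightarrow> (f has_real_derivative f' x) (at x) \<and> f' x > 0"
    have "\<forall>x. a < x \<and> x < b \<longrightarrow> f differentiable (at x)" using d real_differentiable_def by blast
    then obtain l z where z: "a < z" "z < b" "(f has_real_derivative l) (at z)" "f b - f a = (b - a) * l"
      using MVT[OF ab continuous_at_imp_continuous_on] cont d real_differentiable_def by blast
    have "l = f' z" using d z DERIV_unique by blast
    hence "l > 0" using d z by auto
    then show "f a < f b" using z ab by (smt (verit) mult_pos_pos)
  qed
next
  case (insert t T)
  show ?case
  proof (intro allI impI)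
    fix a b :: real assume ab: "a < b" and d: "\<forall>x. a < x \<and> x < b \<and> x \<notin> insert t T \<longrightarrow> (f has_real_derivative f' x) (at x) \<and> f' x > 0"
    show "f a < f b"
    proof (cases "a < t \<and> t < b")
      case True
      have "f a < f t" using insert.IH True d by auto
      moreover have "f t < f b" using insert.IH True d by auto
      ultimately show ?thesis by simp
    next
      case False
      then show ?thesis using insert.IH ab d by auto
    qed
  qed
qed

lemma Theta_strict_mono: assumes p: "p > 0" shows "strict_mono (Theta p)"
proof (rule strict_monoI)
  fix a b :: real assume ab: "a < b"
  define T where "T = (\<lambda>m. of_int m * pi / 4) ` {\<lceil>4 * a / pi\<rceil>..\<lfloor>4 * b / pi\<rfloor>}"
  have fT: "finite T" by (simp add: T_def)
  have d: "\<forall>x. a < x \<and> x < b \<and> x \<notin> T \<longrightarrow> (Theta p has_real_derivative Tp p x) (at x) \<and> Tp p x > 0"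
  proof (intro allI impI)
    fix x assume x: "a < x \<and> x < b \<and> x \<notin> T"
    define m where "m = \<lfloor>4 * x / pi\<rfloor>"
    have "of_int m \<le> 4 * x / pi" "4 * x / pi < of_int m + 1" unfolding m_def by linarith+
    hence b1: "of_int m * pi / 4 \<le> x" "x < of_int (m + 1) * pi / 4" using pi_gt_zero
      by (auto simp: field_simps)
    have "x \<noteq> of_int m * pi / 4"
    proof
      assume e: "x = of_int m * pi / 4"
      have "4 * x / pi = of_int m" unfolding e using pi_gt_zero by simp
      hence "\<lceil>4 * a / pi\<rceil> \<le> m" "m \<le> \<lfloor>4 * b / pi\<rfloor>"
      proof -
        have "4 * a / pi < 4 * x / pi" "4 * x / pi < 4 * b / pi" using x pi_gt_zero by (auto simp: divide_strict_right_mono)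
        then show "\<lceil>4 * a / pi\<rceil> \<le> m" "m \<le> \<lfloor>4 * b / pi\<rfloor>" using \<open>4 * x / pi = of_int m\<close>
          by (simp_all add: ceiling_le_iff le_floor_iff)
      qed
      hence "x \<in> T" using e by (auto simp: T_def)
      then show False using x by simp
    qed
    hence b2: "of_int m * pi / 4 < x" using b1 by simp
    show "(Theta p has_real_derivative Tp p x) (at x) \<and> Tp p x > 0"
      using Theta_deriv[OF p b2 b1(2)] Tp_pos[OF p trig_facts(2)[OF b2 b1(2)]] by simp
  qed
  show "Theta p a < Theta p b"
    using mono_aux[OF fT, of "Theta p" "Tp p"] Theta_cont[OF p] ab d by blast
qed

lemma SS_pos: assumes "p > 0" shows "SS p > 0"
proof -
  have "1 + 1 / p > 0" "1 + 2 / p > 0" using assms by (auto simp: add_pos_pos)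
  hence "Gamma (1 + 1 / p) > 0" "Gamma (1 + 2 / p) > 0" by (auto intro: Gamma_real_pos)
  then show ?thesis unfolding SS_def by (intro divide_pos_pos mult_pos_pos) auto
qed

lemma Theta_half: assumes p: "p > 0" shows "Theta p (of_int j * pi / 2) = of_int j * SS p / 2"
proof -
  have "4 * (of_int j * pi / 2) / pi = of_int (2 * j)" by simp
  hence fl: "\<lfloor>4 * (of_int j * pi / 2) / pi\<rfloor> = 2 * j" by (simp only: floor_of_int)
  have s: "sin (2 * (of_int j * pi / 2)) = 0"
  proof -
    have "sin (2 * (of_int j * pi / 2)) = sin (0 + of_int j * pi)" by simp
    also have "\<dots> = 0" by (simp only: sin_shift_int) simp
    finally show ?thesis .
  qed
  have "Theta p (of_int j * pi / 2) = EE p (2 * j) (of_int j * pi / 2)" by (simp only: Theta_eq fl)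
  also have "\<dots> = AA p (2 * j)" unfolding EE_def s zero_power2 incBeta_0 by simp
  also have "\<dots> = of_int j * SS p / 2" by (simp add: AA_def)
  finally show ?thesis .
qed

lemma Theta_0: assumes p: "p > 0" shows "Theta p 0 = 0"
  using Theta_half[OF p, of 0] by simp

lemma Theta_surj: assumes p: "p > 0" shows "surj (Theta p)"
proof -
  have "\<exists>x. Theta p x = y" for y
  proof -
    define j where "j = \<lfloor>2 * y / SS p\<rfloor>"
    have S: "SS p > 0" by (rule SS_pos[OF p])
    have "of_int j \<le> 2 * y / SS p" "2 * y / SS p < of_int j + 1" unfolding j_def by linarith+
    hence y1: "of_int j * SS p / 2 \<le> y" "y \<le> of_int (j + 1) * SS p / 2" using S by (auto simp: field_simps)
    have t1: "Theta p (of_int j * pi / 2) \<le> y" using y1 Theta_half[OF p, of j] by simp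
    have t2: "y \<le> Theta p (of_int (j + 1) * pi / 2)" using y1 Theta_half[OF p, of "j+1"] by simp
    have t3: "of_int j * pi / 2 \<le> of_int (j + 1) * pi / 2" using pi_gt_zero by (simp add: field_simps)
    have "\<exists>x\<ge>of_int j * pi / 2. x \<le> of_int (j + 1) * pi / 2 \<and> Theta p x = y"
      by (rule IVT[OF t1 t2 t3]) (use Theta_cont[OF p] in auto)
    then show ?thesis by blast
  qed
  then show ?thesis by (metis surjI)
qed

lemma phi_Theta: assumes p: "p > 0" shows "phi p (Theta p x) = x"
  unfolding phi_def using strict_mono_imp_inj_on[OF Theta_strict_mono[OF p]]
  by (simp add: inv_f_f)

lemma Theta_phi: assumes p: "p > 0" shows "Theta p (phi p y) = y"
  unfolding phi_def using Theta_surj[OF p] by (simp add: surj_f_inv_f)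


lemma key_deriv:
  fixes T g h T' g' psi :: "real \<Rightarrow> real"
  assumes mono: "strict_mono T" and inv1: "\<And>x. psi (T x) = x" and inv2: "\<And>y. T (psi y) = y"
    and cT: "\<And>x. isCont T x" and cg: "\<And>x. isCont g x"
    and d: "d > 0"
    and loc: "\<And>x. x \<noteq> x0 \<Longrightarrow> \<bar>x - x0\<bar> < d \<Longrightarrow> (T has_real_derivative T' x) (at x)
        \<and> (g has_real_derivative g' x) (at x) \<and> T' x \<noteq> 0 \<and> g' x = h x * T' x"
    and ch: "isCont h x0"
  shows "((\<lambda>y. g (psi y)) has_real_derivative h x0) (at (T x0))"
proof -
  have monoiff: "T a < T b \<longleftrightarrow> a < b" for a b using mono strict_mono_less by blast
  have "(\<lambda>y. (g (psi y) - g (psi (T x0))) / (y - T x0)) \<midarrow>T x0\<rightarrow> h x0"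
  proof (rule LIM_I)
    fix r :: real assume r: "0 < r"
    obtain e where e: "e > 0" and he0: "\<forall>x. x \<noteq> x0 \<and> norm (x - x0) < e \<longrightarrow> norm (h x - h x0) < r"
      using LIM_D[OF ch[unfolded isCont_def] r] by blast
    have he: "\<bar>h x - h x0\<bar> < r" if "\<bar>x - x0\<bar> < e" for x
      using he0 that r by (cases "x = x0") auto
    define e' where "e' = min e d / 2"
    have e': "e' > 0" "e' < e" "e' < d" using e d by (auto simp: e'_def)
    define s where "s = min (T x0 - T (x0 - e')) (T (x0 + e') - T x0)"
    have s: "s > 0" using e' monoiff[of "x0 - e'" x0] monoiff[of x0 "x0 + e'"] by (auto simp: s_def)
    show "\<exists>s>0. \<forall>y. y \<noteq> T x0 \<and> norm (y - T x0) < s \<longrightarrow>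
        norm ((g (psi y) - g (psi (T x0))) / (y - T x0) - h x0) < r"
    proof (intro exI[of _ s] conjI allI impI s)
      fix y assume y: "y \<noteq> T x0 \<and> norm (y - T x0) < s"
      define x where "x = psi y"
      have Tx: "T x = y" by (simp add: x_def inv2)
      have "T (x0 - e') < T x" "T x < T (x0 + e')" using y Tx by (auto simp: s_def)
      hence xb: "x0 - e' < x" "x < x0 + e'" using monoiff by blast+
      have xne: "x \<noteq> x0" using y Tx by auto
      have ex: "\<exists>c. c \<noteq> x0 \<and> \<bar>c - x0\<bar> < e' \<and> g x0 - g x = (T x0 - T x) * h c"
      proof (cases "x < x0")
        case True
        have dz: "(T has_real_derivative T' z) (at z) \<and> (g has_real_derivative g' z) (at z)" if "x < z" "z < x0" for z
        proof -
          have "z \<noteq> x0" "\<bar>z - x0\<bar> < d" using that xb e' by auto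
          then show ?thesis using loc by blast
        qed
        have "\<exists>c. x < c \<and> c < x0 \<and> (g x0 - g x) * T' c = (T x0 - T x) * g' c"
          by (rule GMVT'[OF True, of g T T' g']) (use cg cT dz in auto)
        then obtain c where c: "x < c" "c < x0" "(g x0 - g x) * T' c = (T x0 - T x) * g' c" by blast
        have "T' c \<noteq> 0" "g' c = h c * T' c" using loc[of c] c xb e' by auto
        with c have "g x0 - g x = (T x0 - T x) * h c" by (metis mult.assoc mult_right_cancel)
        then show ?thesis using c xb by (intro exI[of _ c]) auto
      next
        case False
        hence F: "x0 < x" using xne by auto
        have dz: "(T has_real_derivative T' z) (at z) \<and> (g has_real_derivative g' z) (at z)" if "x0 < z" "z < x" for z
        proof -
          have "z \<noteq> x0" "\<bar>z - x0\<bar> < d" using that xb e' by auto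
          then show ?thesis using loc by blast
        qed
        have "\<exists>c. x0 < c \<and> c < x \<and> (g x - g x0) * T' c = (T x - T x0) * g' c"
          by (rule GMVT'[OF F, of g T T' g']) (use cg cT dz in auto)
        then obtain c where c: "x0 < c" "c < x" "(g x - g x0) * T' c = (T x - T x0) * g' c" by blast
        have "T' c \<noteq> 0" "g' c = h c * T' c" using loc[of c] c xb e' by auto
        with c have "g x - g x0 = (T x - T x0) * h c" by (metis mult.assoc mult_right_cancel)
        then show ?thesis using c xb by (intro exI[of _ c]) (auto simp: algebra_simps)
      qed
      then obtain c where c: "\<bar>c - x0\<bar> < e'" "g x0 - g x = (T x0 - T x) * h c" by blast
      have nz: "T x - T x0 \<noteq> 0" using Tx y by auto
      have "g x - g x0 = - (g x0 - g x)" by simp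
      also have "\<dots> = - ((T x0 - T x) * h c)" by (simp only: c(2))
      also have "\<dots> = (T x - T x0) * h c" by (simp add: algebra_simps)
      finally have c2: "g x - g x0 = (T x - T x0) * h c" .
      have "(g x - g x0) / (T x - T x0) = h c" using nz by (simp add: c2)
      hence "(g (psi y) - g (psi (T x0))) / (y - T x0) = h c"
        by (simp add: inv1 x_def[symmetric] Tx[symmetric])
      then show "norm ((g (psi y) - g (psi (T x0))) / (y - T x0) - h x0) < r"
        using he[of c] c e' by simp
    qed
  qed
  then show ?thesis by (simp add: has_field_derivative_iff inv1)
qed

lemma local_nbhd: "\<exists>d>0. \<forall>x. x \<noteq> x0 \<and> \<bar>x - x0\<bar> < d \<longrightarrow> (\<exists>m::int. of_int m * pi / 4 < x \<and> x < of_int (m + 1) * pi / 4)"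
proof -
  define m where "m = \<lfloor>4 * x0 / pi\<rfloor>"
  have "of_int m \<le> 4 * x0 / pi" "4 * x0 / pi < of_int m + 1" unfolding m_def by linarith+
  hence xm: "of_int m * pi / 4 \<le> x0" "x0 < of_int (m + 1) * pi / 4" using pi_gt_zero
    by (auto simp: field_simps)
  have q1: "of_int (m + 1) * pi / 4 = of_int m * pi / 4 + pi / 4" by (simp add: field_simps)
  have q0: "of_int (m - 1 + 1) * pi / 4 = of_int m * pi / 4" by simp
  have q2: "of_int (m - 1) * pi / 4 = of_int m * pi / 4 - pi / 4" by (simp add: field_simps)
  show ?thesis
  proof (cases "x0 = of_int m * pi / 4")
    case True
    show ?thesis
    proof (intro exI[of _ "pi / 4"] conjI allI impI)
      show "pi / 4 > 0" by simp
      fix x assume x: "x \<noteq> x0 \<and> \<bar>x - x0\<bar> < pi / 4"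
      show "\<exists>m::int. of_int m * pi / 4 < x \<and> x < of_int (m + 1) * pi / 4"
      proof (cases "x < x0")
        case True
        have "x0 - pi / 4 < x" using abs_less_iff[THEN iffD1, OF conjunct2[OF x], THEN conjunct1] abs_less_iff[THEN iffD1, OF conjunct2[OF x], THEN conjunct2] by linarith
        hence "of_int (m - 1) * pi / 4 < x \<and> x < of_int (m - 1 + 1) * pi / 4"
          using True \<open>x0 = _\<close> q0 q2 by (intro conjI) linarith+
        then show ?thesis by blast
      next
        case False
        have "x < x0 + pi / 4" using abs_less_iff[THEN iffD1, OF conjunct2[OF x], THEN conjunct1] abs_less_iff[THEN iffD1, OF conjunct2[OF x], THEN conjunct2] by linarith
        moreover have "x0 < x" using False x by simp
        ultimately have "of_int m * pi / 4 < x \<and> x < of_int (m + 1) * pi / 4"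
          using \<open>x0 = _\<close> q1 by (intro conjI) linarith+
        then show ?thesis by blast
      qed
    qed
  next
    case False
    hence lt: "of_int m * pi / 4 < x0" using xm by simp
    define d where "d = min (x0 - of_int m * pi / 4) (of_int (m + 1) * pi / 4 - x0)"
    show ?thesis
    proof (intro exI[of _ d] conjI allI impI)
      show "d > 0" using lt xm by (simp add: d_def)
      fix x assume x: "x \<noteq> x0 \<and> \<bar>x - x0\<bar> < d"
      have "x0 - d < x" "x < x0 + d" using abs_less_iff[THEN iffD1, OF conjunct2[OF x], THEN conjunct1] abs_less_iff[THEN iffD1, OF conjunct2[OF x], THEN conjunct2] by linarith+
      moreover have "d \<le> x0 - of_int m * pi / 4" "d \<le> of_int (m + 1) * pi / 4 - x0" by (simp_all add: d_def)
      ultimately have "of_int m * pi / 4 < x \<and> x < of_int (m + 1) * pi / 4" by (intro conjI) linarith+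
      then show "\<exists>m::int. of_int m * pi / 4 < x \<and> x < of_int (m + 1) * pi / 4" by blast
    qed
  qed
qed

lemma Tp_alt: assumes p: "p > 0" and s: "sin x \<noteq> 0" and c: "cos x \<noteq> 0"
  shows "Tp p x = (2 / p) * \<bar>sin x\<bar> powr (2 / p - 1) * \<bar>cos x\<bar> powr (2 / p - 1)"
proof -
  define r where "r = 2 / p - 1"
  have "\<bar>sin (2 * x)\<bar> powr r = 2 powr r * \<bar>sin x\<bar> powr r * \<bar>cos x\<bar> powr r"
    by (simp add: sin_double abs_mult powr_mult)
  moreover have "(4::real) powr (- 1 / p) * 2 powr r = 1 / 2"
  proof -
    have "(4::real) powr (- 1 / p) = (2 powr 2) powr (- 1 / p)" by simp
    also have "\<dots> = 2 powr (2 * (- 1 / p))" by (simp only: powr_powr)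
    finally have A: "(4::real) powr (- 1 / p) = 2 powr (2 * (- 1 / p))" .
    have "(4::real) powr (- 1 / p) * 2 powr r = 2 powr (2 * (- 1 / p) + r)" by (simp only: A powr_add)
    also have "2 * (- 1 / p) + r = - 1" by (simp add: r_def)
    also have "(2::real) powr (- 1) = 1 / 2" using powr_minus_divide[of "2::real" 1] by simp
    finally show ?thesis .
  qed
  ultimately have "Tp p x = 4 * (1 / p) * ((4::real) powr (- 1 / p) * 2 powr r) * \<bar>sin x\<bar> powr r * \<bar>cos x\<bar> powr r"
    unfolding Tp_def r_def[symmetric] by (simp only: ac_simps)
  also have "\<dots> = (2 / p) * \<bar>sin x\<bar> powr r * \<bar>cos x\<bar> powr r" by (simp only: \<open>_ = 1 / 2\<close>) simp
  finally show ?thesis by (simp add: r_def)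
qed

lemma ps_mult_inv: assumes "u \<noteq> 0" "b + c = 1"
  shows "ps b u * \<bar>u\<bar> powr c = u"
proof -
  have "ps b u * \<bar>u\<bar> powr c = (\<bar>u\<bar> powr b * \<bar>u\<bar> powr c) * sgn u" by (simp add: ps_def ac_simps)
  also have "\<bar>u\<bar> powr b * \<bar>u\<bar> powr c = \<bar>u\<bar> powr (b + c)" by (simp only: powr_add)
  also have "\<dots> = \<bar>u\<bar>" using assms by simp
  finally show ?thesis by (simp add: abs_mult_sgn)
qed

lemma ps_pow: assumes "a > 0" shows "\<bar>ps a u\<bar> powr c * sgn (ps a u) = ps (a * c) u"
proof (cases "u = 0")
  case True then show ?thesis by (simp add: ps_def)
next
  case False
  have "\<bar>ps a u\<bar> = \<bar>u\<bar> powr a" by (simp add: ps_def abs_mult abs_sgn_eq False)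
  moreover have "sgn (ps a u) = sgn u" using False by (simp add: ps_def sgn_mult)
  ultimately show ?thesis by (simp add: ps_def powr_powr)
qed

lemma cosp_ps: "cosp p t = ps (2 / p) (cos (phi p t))" by (simp add: cosp_def ps_def)
lemma sinp_ps: "sinp p t = ps (2 / p) (sin (phi p t))" by (simp add: sinp_def ps_def)


lemma cos_deriv_main: assumes p: "p > 1"
  shows "(cosp p has_real_derivative - ps (2 - 2 / p) (sin (phi p t))) (at t)"
proof -
  have p0: "p > 0" using p by simp
  define x0 where "x0 = phi p t"
  obtain d where d: "d > 0" and dd: "\<And>x. x \<noteq> x0 \<Longrightarrow> \<bar>x - x0\<bar> < d \<Longrightarrow> \<exists>m::int. of_int m * pi / 4 < x \<and> x < of_int (m + 1) * pi / 4"
    using local_nbhd[of x0] by blast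
  have r: "((\<lambda>y. ps (2 / p) (cos (phi p y))) has_real_derivative (- ps (2 - 2 / p) (sin x0))) (at (Theta p x0))"
  proof (rule key_deriv[where T' = "Tp p" and g' = "\<lambda>x. (2 / p) * \<bar>cos x\<bar> powr (2 / p - 1) * (- sin x)" and d = d
      and T = "Theta p" and psi = "phi p" and g = "\<lambda>x. ps (2 / p) (cos x)" and h = "\<lambda>x. - ps (2 - 2 / p) (sin x)"])
    show "strict_mono (Theta p)" by (rule Theta_strict_mono[OF p0])
    show "\<And>x. phi p (Theta p x) = x" by (rule phi_Theta[OF p0])
    show "\<And>y. Theta p (phi p y) = y" by (rule Theta_phi[OF p0])
    show "\<And>x. isCont (Theta p) x" by (rule Theta_cont[OF p0])
    show "\<And>x. isCont (\<lambda>x. ps (2 / p) (cos x)) x" by (rule isCont_o2[OF isCont_cos ps_cont]) (use p0 in auto)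
    show "0 < d" by (rule d)
    show "isCont (\<lambda>x. - ps (2 - 2 / p) (sin x)) x0"
      by (rule isCont_minus, rule isCont_o2[OF isCont_sin ps_cont]) (use p in \<open>auto simp: field_simps\<close>)
    fix x assume x: "x \<noteq> x0" "\<bar>x - x0\<bar> < d"
    then obtain m :: int where m: "of_int m * pi / 4 < x" "x < of_int (m + 1) * pi / 4" using dd by blast
    note tf = trig_facts[OF m]
    show "(Theta p has_real_derivative Tp p x) (at x) \<and>
         ((\<lambda>x. ps (2 / p) (cos x)) has_real_derivative (2 / p) * \<bar>cos x\<bar> powr (2 / p - 1) * (- sin x)) (at x) \<and>
         Tp p x \<noteq> 0 \<and> (2 / p) * \<bar>cos x\<bar> powr (2 / p - 1) * (- sin x) = - ps (2 - 2 / p) (sin x) * Tp p x"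
    proof (intro conjI)
      show "(Theta p has_real_derivative Tp p x) (at x)" by (rule Theta_deriv[OF p0 m])
      show "((\<lambda>x. ps (2 / p) (cos x)) has_real_derivative (2 / p) * \<bar>cos x\<bar> powr (2 / p - 1) * (- sin x)) (at x)"
        by (rule DERIV_chain2[OF ps_deriv DERIV_cos]) (rule tf(5))
      show "Tp p x \<noteq> 0" using Tp_pos[OF p0 tf(2)] by simp
      have "ps (2 - 2 / p) (sin x) * \<bar>sin x\<bar> powr (2 / p - 1) = sin x"
        by (rule ps_mult_inv[OF tf(4)]) simp
      then show "(2 / p) * \<bar>cos x\<bar> powr (2 / p - 1) * (- sin x) = - ps (2 - 2 / p) (sin x) * Tp p x"
        (is "?L = _")
      proof -
        note e = \<open>ps (2 - 2 / p) (sin x) * \<bar>sin x\<bar> powr (2 / p - 1) = sin x\<close>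
        have "- ps (2 - 2 / p) (sin x) * Tp p x = - ps (2 - 2 / p) (sin x) * ((2 / p) * \<bar>sin x\<bar> powr (2 / p - 1) * \<bar>cos x\<bar> powr (2 / p - 1))"
          by (simp only: Tp_alt[OF p0 tf(4) tf(5)])
        also have "\<dots> = - ((2 / p) * \<bar>cos x\<bar> powr (2 / p - 1) * (ps (2 - 2 / p) (sin x) * \<bar>sin x\<bar> powr (2 / p - 1)))"
          by (simp add: algebra_simps)
        also have "\<dots> = ?L" by (simp add: e)
        finally show ?thesis by simp
      qed
    qed
  qed
  have f: "(\<lambda>y. ps (2 / p) (cos (phi p y))) = cosp p" by (rule ext) (simp add: cosp_ps)
  show ?thesis using r unfolding f x0_def Theta_phi[OF p0] .
qed

lemma sin_deriv_main: assumes p: "p > 1"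
  shows "(sinp p has_real_derivative ps (2 - 2 / p) (cos (phi p t))) (at t)"
proof -
  have p0: "p > 0" using p by simp
  define x0 where "x0 = phi p t"
  obtain d where d: "d > 0" and dd: "\<And>x. x \<noteq> x0 \<Longrightarrow> \<bar>x - x0\<bar> < d \<Longrightarrow> \<exists>m::int. of_int m * pi / 4 < x \<and> x < of_int (m + 1) * pi / 4"
    using local_nbhd[of x0] by blast
  have r: "((\<lambda>y. ps (2 / p) (sin (phi p y))) has_real_derivative (ps (2 - 2 / p) (cos x0))) (at (Theta p x0))"
  proof (rule key_deriv[where T' = "Tp p" and g' = "\<lambda>x. (2 / p) * \<bar>sin x\<bar> powr (2 / p - 1) * cos x" and d = d
      and T = "Theta p" and psi = "phi p" and g = "\<lambda>x. ps (2 / p) (sin x)" and h = "\<lambda>x. ps (2 - 2 / p) (cos x)"])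
    show "strict_mono (Theta p)" by (rule Theta_strict_mono[OF p0])
    show "\<And>x. phi p (Theta p x) = x" by (rule phi_Theta[OF p0])
    show "\<And>y. Theta p (phi p y) = y" by (rule Theta_phi[OF p0])
    show "\<And>x. isCont (Theta p) x" by (rule Theta_cont[OF p0])
    show "\<And>x. isCont (\<lambda>x. ps (2 / p) (sin x)) x" by (rule isCont_o2[OF isCont_sin ps_cont]) (use p0 in auto)
    show "0 < d" by (rule d)
    show "isCont (\<lambda>x. ps (2 - 2 / p) (cos x)) x0"
      by (rule isCont_o2[OF isCont_cos ps_cont]) (use p in \<open>auto simp: field_simps\<close>)
    fix x assume x: "x \<noteq> x0" "\<bar>x - x0\<bar> < d"
    then obtain m :: int where m: "of_int m * pi / 4 < x" "x < of_int (m + 1) * pi / 4" using dd by blast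
    note tf = trig_facts[OF m]
    show "(Theta p has_real_derivative Tp p x) (at x) \<and>
         ((\<lambda>x. ps (2 / p) (sin x)) has_real_derivative (2 / p) * \<bar>sin x\<bar> powr (2 / p - 1) * cos x) (at x) \<and>
         Tp p x \<noteq> 0 \<and> (2 / p) * \<bar>sin x\<bar> powr (2 / p - 1) * cos x = ps (2 - 2 / p) (cos x) * Tp p x"
    proof (intro conjI)
      show "(Theta p has_real_derivative Tp p x) (at x)" by (rule Theta_deriv[OF p0 m])
      show "((\<lambda>x. ps (2 / p) (sin x)) has_real_derivative (2 / p) * \<bar>sin x\<bar> powr (2 / p - 1) * cos x) (at x)"
        by (rule DERIV_chain2[OF ps_deriv DERIV_sin]) (rule tf(4))
      show "Tp p x \<noteq> 0" using Tp_pos[OF p0 tf(2)] by simp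
      have "ps (2 - 2 / p) (cos x) * \<bar>cos x\<bar> powr (2 / p - 1) = cos x"
        by (rule ps_mult_inv[OF tf(5)]) simp
      then show "(2 / p) * \<bar>sin x\<bar> powr (2 / p - 1) * cos x = ps (2 - 2 / p) (cos x) * Tp p x"
        (is "?L = _")
      proof -
        note e = \<open>ps (2 - 2 / p) (cos x) * \<bar>cos x\<bar> powr (2 / p - 1) = cos x\<close>
        have "ps (2 - 2 / p) (cos x) * Tp p x = ps (2 - 2 / p) (cos x) * ((2 / p) * \<bar>sin x\<bar> powr (2 / p - 1) * \<bar>cos x\<bar> powr (2 / p - 1))"
          by (simp only: Tp_alt[OF p0 tf(4) tf(5)])
        also have "\<dots> = (2 / p) * \<bar>sin x\<bar> powr (2 / p - 1) * (ps (2 - 2 / p) (cos x) * \<bar>cos x\<bar> powr (2 / p - 1))"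
          by (simp add: algebra_simps)
        also have "\<dots> = ?L" by (simp only: e)
        finally show ?thesis by simp
      qed
    qed
  qed
  have f: "(\<lambda>y. ps (2 / p) (sin (phi p y))) = sinp p" by (rule ext) (simp add: sinp_ps)
  show ?thesis using r unfolding f x0_def Theta_phi[OF p0] .
qed


theorem mainTheorem7:
  fixes p :: real
  assumes "1 < p"
  shows "(\<forall>\<theta>. (cosp p has_real_derivative
              - (\<bar>sinp p \<theta>\<bar> powr (p - 1) * sgn (sinp p \<theta>))) (at \<theta>))
       \<and> (\<forall>\<theta>. (sinp p has_real_derivative
              \<bar>cosp p \<theta>\<bar> powr (p - 1) * sgn (cosp p \<theta>)) (at \<theta>))
       \<and> cosp p 0 = 1 \<and> sinp p 0 = 0
       \<and> (\<forall>q::real. p * q = p + q \<longrightarrow>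
            (\<forall>\<theta>. (cosp p has_real_derivative - sinp q (Theta q (phi p \<theta>))) (at \<theta>)
                \<and> (sinp p has_real_derivative cosp q (Theta q (phi p \<theta>))) (at \<theta>)))"
proof -
  have p0: "p > 0" using assms by simp
  have c1: "\<And>t. - (\<bar>sinp p t\<bar> powr (p - 1) * sgn (sinp p t)) = - ps (2 - 2 / p) (sin (phi p t))"
  proof -
    fix t
    have "\<bar>sinp p t\<bar> powr (p - 1) * sgn (sinp p t) = ps (2 / p * (p - 1)) (sin (phi p t))"
      unfolding sinp_ps by (rule ps_pow) (use p0 in simp)
    also have "2 / p * (p - 1) = 2 - 2 / p" using p0 by (simp add: field_simps)
    finally show "- (\<bar>sinp p t\<bar> powr (p - 1) * sgn (sinp p t)) = - ps (2 - 2 / p) (sin (phi p t))" by simp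
  qed
  have c2: "\<And>t. \<bar>cosp p t\<bar> powr (p - 1) * sgn (cosp p t) = ps (2 - 2 / p) (cos (phi p t))"
  proof -
    fix t
    have "\<bar>cosp p t\<bar> powr (p - 1) * sgn (cosp p t) = ps (2 / p * (p - 1)) (cos (phi p t))"
      unfolding cosp_ps by (rule ps_pow) (use p0 in simp)
    also have "2 / p * (p - 1) = 2 - 2 / p" using p0 by (simp add: field_simps)
    finally show "\<bar>cosp p t\<bar> powr (p - 1) * sgn (cosp p t) = ps (2 - 2 / p) (cos (phi p t))" .
  qed
  have ph0: "phi p 0 = 0" using phi_Theta[OF p0, of 0] Theta_0[OF p0] by simp
  show ?thesis
  proof (intro conjI allI impI)
    fix t show "(cosp p has_real_derivative - (\<bar>sinp p t\<bar> powr (p - 1) * sgn (sinp p t))) (at t)"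
      unfolding c1 by (rule cos_deriv_main[OF assms])
  next
    fix t show "(sinp p has_real_derivative \<bar>cosp p t\<bar> powr (p - 1) * sgn (cosp p t)) (at t)"
      unfolding c2 by (rule sin_deriv_main[OF assms])
  next
    show "cosp p 0 = 1" by (simp add: cosp_def ph0)
  next
    show "sinp p 0 = 0" by (simp add: sinp_def ph0)
  next
    fix q t :: real assume pq: "p * q = p + q"
    have q1: "q * (p - 1) = p" using pq by (simp add: algebra_simps)
    have q0: "q > 0"
    proof (rule ccontr)
      assume "\<not> q > 0"
      hence "q * (p - 1) \<le> 0" using assms by (simp add: mult_nonpos_nonneg)
      then show False using q1 p0 by simp
    qed
    have qq: "2 / q = 2 - 2 / p"
    proof -
      have "2 / q = 2 * (p - 1) / p" using q1 q0 p0 by (simp add: field_simps)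
      also have "\<dots> = 2 - 2 / p" using p0 by (simp add: field_simps)
      finally show ?thesis .
    qed
    have s: "sinp q (Theta q (phi p t)) = ps (2 - 2 / p) (sin (phi p t))"
      by (simp only: sinp_ps phi_Theta[OF q0] qq)
    have c: "cosp q (Theta q (phi p t)) = ps (2 - 2 / p) (cos (phi p t))"
      by (simp only: cosp_ps phi_Theta[OF q0] qq)
    show "(cosp p has_real_derivative - sinp q (Theta q (phi p t))) (at t)"
      unfolding s by (rule cos_deriv_main[OF assms])
    show "(sinp p has_real_derivative cosp q (Theta q (phi p t))) (at t)"
      unfolding c by (rule sin_deriv_main[OF assms])
  qed
qed


end
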